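(* Let $\hat P=\mathrm{Spec}(B)$ be an affine extension of a principal $\mathbb{G}_a$-bundle $P\to S_*$, with $D$ the locally nilpotent derivation of $B$ given by the $\mathbb{G}_a$-action. Then for every $\nu>0$ the zero locus in $S$ of the ideal $\mathfrak m_\nu(B)=D^\nu(\ker D^{\nu+1})\subset\mathcal O(S)$ is contained in $\{\mathbf x\}$; i.e. either all these ideals are $\mathfrak m_{\mathbf x}$-primary, or (in the remaining case) $\mathrm{gr}_D(B)=\mathcal O(S)[t]$.
   Context: All varieties are over $\mathbb{C}$. $S$ normal affine surface, $\mathbf{x}\in S$ a closed regular point with maximal ideal $\mathfrak m_{\mathbf x}$, $S_*=S\setminus\{\mathbf{x}\}$. An affine extension of $\pi\colon P\to S_*$ is a normal affine $\mathbb{G}_a$-variety $\hat P=\mathrm{Spec}(B)$ with a morphism $\hat\pi\colon\hat P\to S$ and a $\mathbb{G}_a$-equivariant dominant open embedding $\iota\colon P\hookrightarrow\hat P$ with $\iota(P)=\hat\pi^{-1}(S_* )$ and $\hat\pi\circ\iota=\pi$. Here $\ker D=\mathcal O(S)$. $\mathrm{gr}_D(B)=\bigoplus_\nu \ker D^{\nu+1}/\ker D^\nu\simeq\bigoplus_\nu\mathfrak m_\nu(B)t^\nu\subset\mathcal O(S)[t]$ via $b\mapsto \frac{D^\nu b}{\nu!}t^\nu$. *)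

theory Defs
  imports Complex_Main
begin

text \<open>Commutative algebra over the complex numbers, rendered with a domain type 'b
 (the coordinate ring B of the affine extension) and a ring embedding of the
 scalars. Subrings (such as O(S) = ker D) are subsets of 'b.\<close>

definition scalar_hom :: "(complex \<Rightarrow> 'b::idom) \<Rightarrow> bool" where
  "scalar_hom \<iota> \<longleftrightarrow> (\<forall>a b. \<iota> (a + b) = \<iota> a + \<iota> b) \<and> (\<forall>a b. \<iota> (a * b) = \<iota> a * \<iota> b)
     \<and> \<iota> 1 = 1"

inductive_set subalg :: "'b::comm_ring_1 set \<Rightarrow> 'b set \<Rightarrow> 'b set" for R G where
  base: "r \<in> R \<Longrightarrow> r \<in> subalg R G"
| gen: "g \<in> G \<Longrightarrow> g \<in> subalg R G"
| add: "x \<in> subalg R G \<Longrightarrow> y \<in> subalg R G \<Longrightarrow> x + y \<in> subalg R G"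
| mult: "x \<in> subalg R G \<Longrightarrow> y \<in> subalg R G \<Longrightarrow> x * y \<in> subalg R G"

definition fg_algebra :: "(complex \<Rightarrow> 'b::comm_ring_1) \<Rightarrow> 'b set \<Rightarrow> bool" where
  "fg_algebra \<iota> R \<longleftrightarrow> (\<exists>G. finite G \<and> G \<subseteq> R \<and> subalg (range \<iota>) G = R)"

definition derivation :: "(complex \<Rightarrow> 'b::comm_ring_1) \<Rightarrow> ('b \<Rightarrow> 'b) \<Rightarrow> bool" where
  "derivation \<iota> D \<longleftrightarrow> (\<forall>x y. D (x + y) = D x + D y) \<and> (\<forall>x y. D (x * y) = x * D y + y * D x)
     \<and> (\<forall>c. D (\<iota> c) = 0)"

definition locally_nilpotent :: "('b::zero \<Rightarrow> 'b) \<Rightarrow> bool" where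
  "locally_nilpotent D \<longleftrightarrow> (\<forall>b. \<exists>n. (D ^^ n) b = 0)"

definition ideal_in :: "'b::comm_ring_1 set \<Rightarrow> 'b set \<Rightarrow> bool" where
  "ideal_in A I \<longleftrightarrow> I \<subseteq> A \<and> 0 \<in> I \<and> (\<forall>x\<in>I. \<forall>y\<in>I. x + y \<in> I) \<and> (\<forall>a\<in>A. \<forall>x\<in>I. a * x \<in> I)"

definition ideal_gen :: "'b::comm_ring_1 set \<Rightarrow> 'b set \<Rightarrow> 'b set" where
  "ideal_gen A S = \<Inter> {I. ideal_in A I \<and> S \<subseteq> I}"

definition prime_in :: "'b::comm_ring_1 set \<Rightarrow> 'b set \<Rightarrow> bool" where
  "prime_in A P \<longleftrightarrow> ideal_in A P \<and> P \<noteq> A \<and> (\<forall>x\<in>A. \<forall>y\<in>A. x * y \<in> P \<longrightarrow> x \<in> P \<or> y \<in> P)"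

definition maximal_in :: "'b::comm_ring_1 set \<Rightarrow> 'b set \<Rightarrow> bool" where
  "maximal_in A M \<longleftrightarrow> ideal_in A M \<and> M \<noteq> A \<and>
     (\<forall>J. ideal_in A J \<and> M \<subseteq> J \<longrightarrow> J = M \<or> J = A)"

definition prime_chain :: "'b::comm_ring_1 set \<Rightarrow> (nat \<Rightarrow> 'b set) \<Rightarrow> nat \<Rightarrow> bool" where
  "prime_chain A p n \<longleftrightarrow> (\<forall>i\<le>n. prime_in A (p i)) \<and> (\<forall>i<n. p i \<subset> p (Suc i))"

definition krull_dim_eq :: "'b::comm_ring_1 set \<Rightarrow> nat \<Rightarrow> bool" where
  "krull_dim_eq A n \<longleftrightarrow> (\<exists>p. prime_chain A p n) \<and> \<not> (\<exists>p. prime_chain A p (Suc n))"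

definition height_eq :: "'b::comm_ring_1 set \<Rightarrow> 'b set \<Rightarrow> nat \<Rightarrow> bool" where
  "height_eq A M n \<longleftrightarrow> (\<exists>p. prime_chain A p n \<and> p n = M) \<and>
     \<not> (\<exists>p. prime_chain A p (Suc n) \<and> p (Suc n) = M)"

definition ideal_sq :: "'b::comm_ring_1 set \<Rightarrow> 'b set \<Rightarrow> 'b set" where
  "ideal_sq A M = ideal_gen A {x * y | x y. x \<in> M \<and> y \<in> M}"

definition ideal_sum :: "'b::comm_ring_1 set \<Rightarrow> 'b set \<Rightarrow> 'b set" where
  "ideal_sum I J = {x + y | x y. x \<in> I \<and> y \<in> J}"

text \<open>Embedding dimension: minimal number of elements of M spanning M/M^2.\<close>
definition cotangent_spanned :: "'b::comm_ring_1 set \<Rightarrow> 'b set \<Rightarrow> 'b set \<Rightarrow> bool" where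
  "cotangent_spanned A M S \<longleftrightarrow> S \<subseteq> M \<and> M \<subseteq> ideal_sum (ideal_gen A S) (ideal_sq A M)"

definition embdim_eq :: "'b::comm_ring_1 set \<Rightarrow> 'b set \<Rightarrow> nat \<Rightarrow> bool" where
  "embdim_eq A M n \<longleftrightarrow> (\<exists>S. finite S \<and> card S = n \<and> cotangent_spanned A M S) \<and>
     \<not> (\<exists>S. finite S \<and> card S < n \<and> cotangent_spanned A M S)"

definition regular_point :: "'b::comm_ring_1 set \<Rightarrow> 'b set \<Rightarrow> bool" where
  "regular_point A M \<longleftrightarrow> maximal_in A M \<and> height_eq A M 2 \<and> embdim_eq A M 2"

text \<open>Normality of a domain R (integrally closed in its fraction field), unfolded:
  if p/q (q \<noteq> 0) satisfies a monic equation over R, then q divides p in R.\<close>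
definition normal_domain :: "'b::idom set \<Rightarrow> bool" where
  "normal_domain R \<longleftrightarrow> (\<forall>p\<in>R. \<forall>q\<in>R. \<forall>n c. q \<noteq> 0 \<and> (\<forall>i<n. c i \<in> R) \<and>
      p ^ n + (\<Sum>i<n. c i * p ^ i * q ^ (n - i)) = 0 \<longrightarrow> (\<exists>r\<in>R. p = r * q))"

text \<open>The principal G_a-bundle condition for P = preimage of S_* in Spec B:
 Zariski-local equivariant triviality. Over a principal open D(f) of S, an
 A_f-isomorphism A_f[t] \<cong> B_f intertwining d/dt with D is the same as an element
 s = b / f^k of B_f with D s = 1 such that A_f[s] = B_f and s is algebraically
 independent over A_f; here written out with fractions cleared.\<close>
definition trivial_over :: "'b::idom set \<Rightarrow> ('b \<Rightarrow> 'b) \<Rightarrow> 'b \<Rightarrow> bool" where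
  "trivial_over A D f \<longleftrightarrow> (\<exists>b k. D b = f ^ k \<and>
      (\<forall>c. \<exists>j n a. (\<forall>i<n. a i \<in> A) \<and> f ^ j * c = (\<Sum>i<n. a i * b ^ i)) \<and>
      (\<forall>n a. (\<forall>i<n. a i \<in> A) \<and> (\<Sum>i<n. a i * b ^ i) = 0 \<longrightarrow> (\<forall>i<n. a i = 0)))"

definition principal_bundle_off :: "'b::idom set \<Rightarrow> ('b \<Rightarrow> 'b) \<Rightarrow> 'b set \<Rightarrow> bool" where
  "principal_bundle_off A D M \<longleftrightarrow>
     (\<forall>N. maximal_in A N \<and> N \<noteq> M \<longrightarrow> (\<exists>f\<in>A. f \<notin> N \<and> trivial_over A D f))"

end

theory Submission
  imports Defs
begin

lemma der_basic:
  assumes "derivation \<iota> D"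
  shows "D 0 = 0" "D 1 = 0" "\<And>x y. D (x + y) = D x + D y" "\<And>x y. D (x * y) = x * D y + y * D x"
proof -
  have add: "\<And>x y. D (x + y) = D x + D y" and mul: "\<And>x y. D (x * y) = x * D y + y * D x"
    using assms unfolding derivation_def by auto
  show "D 0 = 0" using add[of 0 0] by simp
  show "D 1 = 0" using mul[of 1 1] by simp
  show "\<And>x y. D (x + y) = D x + D y" by (rule add)
  show "\<And>x y. D (x * y) = x * D y + y * D x" by (rule mul)
qed

lemma der_of_nat:
  assumes "derivation \<iota> (D :: 'b::idom \<Rightarrow> 'b)"
  shows "D (of_nat k) = 0"
  using der_basic[OF assms] by (induction k) auto

lemma der_pow:
  assumes "derivation \<iota> (D :: 'b::idom \<Rightarrow> 'b)"
  shows "D (b ^ Suc m) = of_nat (Suc m) * b ^ m * D b"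
proof (induction m)
  case 0 then show ?case using der_basic[OF assms] by simp
next
  case (Suc m)
  have "D (b ^ Suc (Suc m)) = D (b * b ^ Suc m)" by simp
  also have "\<dots> = b * D (b ^ Suc m) + b ^ Suc m * D b" using der_basic(4)[OF assms] by blast
  also have "\<dots> = of_nat (Suc (Suc m)) * b ^ Suc m * D b" using Suc by (simp add: algebra_simps)
  finally show ?case .
qed

lemma der_pow_const:
  assumes "derivation \<iota> (D :: 'b::idom \<Rightarrow> 'b)" "D f = 0"
  shows "D (f ^ m) = 0"
  using der_pow[OF assms(1), of f] assms(2) der_basic[OF assms(1)] by (cases m) auto

lemma iter_pow:
  assumes d: "derivation \<iota> (D :: 'b::idom \<Rightarrow> 'b)" and c: "D b = c" "D c = 0"
  shows "j \<le> n \<Longrightarrow> (D ^^ j) (b ^ n) = of_nat (\<Prod>i<j. (n - i)) * c ^ j * b ^ (n - j)"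
proof (induction j)
  case 0 then show ?case by simp
next
  case (Suc j)
  then have IH: "(D ^^ j) (b ^ n) = of_nat (\<Prod>i<j. (n - i)) * c ^ j * b ^ (n - j)" by simp
  obtain m where m: "n - j = Suc m" using Suc.prems by (metis Suc_diff_Suc Suc_le_lessD)
  have mul: "\<And>x y. D (x * y) = x * D y + y * D x" using der_basic[OF d] by blast
  define K where "K = (\<Prod>i<j. (n - i))"
  have Dk0: "D (of_nat K * c ^ j) = 0"
    using mul[of "of_nat K" "c ^ j"] der_of_nat[OF d, of K] der_pow_const[OF d c(2), of j] by simp
  have Dk: "D (of_nat (\<Prod>i<j. (n - i)) * c ^ j) = 0" using Dk0 unfolding K_def .
  have IH': "(D ^^ j) (b ^ n) = of_nat K * c ^ j * b ^ Suc m" using IH m unfolding K_def by simp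
  have "(D ^^ Suc j) (b ^ n) = D (of_nat K * c ^ j * b ^ Suc m)"
    using IH' by simp
  also have "\<dots> = of_nat K * c ^ j * D (b ^ Suc m)"
    using mul[of "of_nat K * c ^ j" "b ^ Suc m"] Dk0 by simp
  also have "\<dots> = of_nat K * c ^ j * (of_nat (Suc m) * b ^ m * c)"
    using der_pow[OF d, of b m] c(1) by simp
  also have "\<dots> = of_nat (K * (n - j)) * c ^ Suc j * b ^ (n - Suc j)"
  proof -
    have m': "n - Suc j = m" using m by simp
    show ?thesis unfolding m' m by (simp add: algebra_simps)
  qed
  also have "K * (n - j) = (\<Prod>i<Suc j. (n - i))" unfolding K_def by simp
  finally show ?case .
qed

lemma scal_of_nat:
  assumes "scalar_hom \<iota>"
  shows "\<iota> (of_nat k) = (of_nat k :: 'b::idom)"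
proof -
  have add: "\<And>a b. \<iota> (a + b) = \<iota> a + \<iota> b" and one: "\<iota> 1 = 1"
    using assms unfolding scalar_hom_def by auto
  have z0: "\<iota> 0 = \<iota> 0 + \<iota> 0" using add[of 0 0] by simp
  have z: "\<iota> 0 = 0" using z0 by (metis add_cancel_left_right)
  show ?thesis by (induction k) (auto simp: z add one)
qed

lemma maximal_prime:
  assumes "maximal_in A N" and subr: "\<And>x y. x \<in> A \<Longrightarrow> y \<in> A \<Longrightarrow> x + y \<in> A \<and> x * y \<in> A" "1 \<in> A"
  shows "x \<in> A \<Longrightarrow> y \<in> A \<Longrightarrow> x * y \<in> N \<Longrightarrow> x \<notin> N \<Longrightarrow> y \<in> N"
proof -
  assume x: "x \<in> A" and y: "y \<in> A" and xy: "x * y \<in> N" and xN: "x \<notin> N"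
  have I: "ideal_in A N" and NA: "N \<noteq> A" and mx: "\<And>J. ideal_in A J \<and> N \<subseteq> J \<longrightarrow> J = N \<or> J = A"
    using assms(1) unfolding maximal_in_def by auto
  have NsubA: "N \<subseteq> A" using I unfolding ideal_in_def by auto
  define J where "J = {n + a * x | n a. n \<in> N \<and> a \<in> A}"
  have "ideal_in A J"
    unfolding ideal_in_def J_def
  proof (intro conjI ballI)
    show "{n + a * x |n a. n \<in> N \<and> a \<in> A} \<subseteq> A" using NsubA subr x by auto
    have "0 \<in> A" using subr(2) I unfolding ideal_in_def by auto
    then show "0 \<in> {n + a * x |n a. n \<in> N \<and> a \<in> A}" using I unfolding ideal_in_def by force
  next
    fix u v assume "u \<in> {n + a * x |n a. n \<in> N \<and> a \<in> A}" "v \<in> {n + a * x |n a. n \<in> N \<and> a \<in> A}"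
    then obtain n1 a1 n2 a2 where "u = n1 + a1 * x" "v = n2 + a2 * x" "n1 \<in> N" "n2 \<in> N" "a1 \<in> A" "a2 \<in> A" by auto
    moreover have "u + v = (n1 + n2) + (a1 + a2) * x" using calculation by (simp add: algebra_simps)
    ultimately show "u + v \<in> {n + a * x |n a. n \<in> N \<and> a \<in> A}"
      using I subr unfolding ideal_in_def by blast
  next
    fix c u assume c: "c \<in> A" and "u \<in> {n + a * x |n a. n \<in> N \<and> a \<in> A}"
    then obtain n1 a1 where "u = n1 + a1 * x" "n1 \<in> N" "a1 \<in> A" by auto
    moreover have "c * u = c * n1 + (c * a1) * x" using calculation by (simp add: algebra_simps)
    ultimately show "c * u \<in> {n + a * x |n a. n \<in> N \<and> a \<in> A}"
      using I subr c unfolding ideal_in_def by blast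
  qed
  moreover have "N \<subseteq> J"
  proof
    fix n assume "n \<in> N"
    have "0 \<in> A" using subr(2) I unfolding ideal_in_def by auto
    then show "n \<in> J" unfolding J_def using \<open>n \<in> N\<close> by force
  qed
  moreover have "x \<in> J"
  proof -
    have "0 \<in> N" using I unfolding ideal_in_def by auto
    then show ?thesis unfolding J_def using subr(2) by force
  qed
  ultimately have "J = A" using mx xN by blast
  then have "1 \<in> J" using subr(2) by simp
  then obtain n a where na: "1 = n + a * x" "n \<in> N" "a \<in> A" unfolding J_def by auto
  have "y = y * n + a * (x * y)" using na(1) by (metis mult.commute mult.left_commute mult_1_right distrib_left)
  moreover have "y * n \<in> N" "a * (x * y) \<in> N" using I y na xy unfolding ideal_in_def by auto
  ultimately show "y \<in> N" using I unfolding ideal_in_def by metis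
qed

theorem mainTheorem10:
  fixes \<iota> :: "complex \<Rightarrow> 'b::idom" and D :: "'b \<Rightarrow> 'b" and A :: "'b set" and M :: "'b set"
  assumes scal: "scalar_hom \<iota>"
    and B_affine: "fg_algebra \<iota> (UNIV :: 'b set)"
    and B_normal: "normal_domain (UNIV :: 'b set)"
    and der: "derivation \<iota> D"
    and lnd: "locally_nilpotent D"
    and A_def: "A = {b. D b = 0}"
    and S_affine: "fg_algebra \<iota> A"
    and S_normal: "normal_domain A"
    and S_surface: "krull_dim_eq A 2"
    and x_regular: "regular_point A M"
    and princ: "principal_bundle_off A D M"
  shows "\<forall>\<nu>>0. \<forall>N. maximal_in A N \<and> (D ^^ \<nu>) ` {b. (D ^^ Suc \<nu>) b = 0} \<subseteq> N \<longrightarrow> N = M"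
proof (intro allI impI)
  fix \<nu> :: nat and N
  assume "\<nu> > 0" and H: "maximal_in A N \<and> (D ^^ \<nu>) ` {b. (D ^^ Suc \<nu>) b = 0} \<subseteq> N"
  have mx: "maximal_in A N" and sub: "(D ^^ \<nu>) ` {b. (D ^^ Suc \<nu>) b = 0} \<subseteq> N" using H by auto
  have I: "ideal_in A N" using mx unfolding maximal_in_def by auto
  have subr: "\<And>x y. x \<in> A \<Longrightarrow> y \<in> A \<Longrightarrow> x + y \<in> A \<and> x * y \<in> A" "1 \<in> A"
    using der_basic[OF der] A_def by auto
  show "N = M"
  proof (rule ccontr)
    assume "N \<noteq> M"
    then obtain f where f: "f \<in> A" "f \<notin> N" "trivial_over A D f" using princ mx
      unfolding principal_bundle_off_def by blast
    then obtain b k where bk: "D b = f ^ k" unfolding trivial_over_def by blast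
    have Df: "D f = 0" using f A_def by auto
    have Dc: "D (f ^ k) = 0" using der_pow_const[OF der Df] .
    define p where "p = (\<Prod>i<\<nu>. (\<nu> - i))"
    have p0: "p \<noteq> 0" unfolding p_def by simp
    have e: "(D ^^ \<nu>) (b ^ \<nu>) = of_nat p * (f ^ k) ^ \<nu>"
      using iter_pow[OF der bk Dc, of \<nu> \<nu>] unfolding p_def by simp
    have "(D ^^ Suc \<nu>) (b ^ \<nu>) = 0"
      using e der_basic(4)[OF der] der_of_nat[OF der] der_pow_const[OF der Dc] by simp
    then have "(D ^^ \<nu>) (b ^ \<nu>) \<in> N" using sub by blast
    then have inN: "of_nat p * f ^ (k * \<nu>) \<in> N" using e by (simp add: power_mult)
    define u where "u = \<iota> (1 / of_nat p)"
    have uA: "u \<in> A" using der A_def unfolding derivation_def u_def by auto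
    have "u * of_nat p = 1"
    proof -
      have "u * of_nat p = \<iota> (1 / of_nat p) * \<iota> (of_nat p)" using scal_of_nat[OF scal] u_def by simp
      also have "\<dots> = \<iota> (1 / of_nat p * of_nat p)" using scal unfolding scalar_hom_def by metis
      also have "(1 / of_nat p * of_nat p :: complex) = 1" using p0 by simp
      also have "\<iota> 1 = 1" using scal unfolding scalar_hom_def by simp
      finally show ?thesis .
    qed
    then have "f ^ (k * \<nu>) = u * (of_nat p * f ^ (k * \<nu>))" by (simp add: mult.assoc[symmetric])
    then have powN: "f ^ (k * \<nu>) \<in> N" using I uA inN unfolding ideal_in_def by metis
    have "\<And>m. f ^ m \<in> N \<Longrightarrow> f \<in> N"
    proof -
      fix m show "f ^ m \<in> N \<Longrightarrow> f \<in> N"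
      proof (induction m)
        case 0
        have cl: "\<forall>a\<in>A. \<forall>x\<in>N. a * x \<in> N" using I by (simp add: ideal_in_def)
        have one: "1 \<in> N" using 0 by simp
        have "f * 1 \<in> N" using cl f(1) one by blast
        then show ?case by simp
      next
        case (Suc m)
        have fmA: "f ^ m \<in> A" using subr f(1) by (induction m) auto
        show ?case using maximal_prime[OF mx subr f(1) fmA] Suc by auto
      qed
    qed
    then show False using powN f(2) by blast
  qed
qed

end
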